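(* Let Assumptions 1 and 2 hold and consider Algorithm 2 with $\eta\in(0,1/L_{\mathrm{avg}}]$. Let $\Delta_k=v_k-\nabla f(y_k)$, let $x_{k+1}$ be the $\epsilon_k$-optimal solution of the $k$-th subproblem, and let $u_k\in\mathbb{R}^d$ be any random vector that is independent of the mini-batch $\mathcal{B}_k$ given the past (i.e. determined by $\mathcal B_0,\dots,\mathcal B_{k-1}$). Then $$\mathbb{E}\langle\Delta_k,u_k-x_{k+1}\rangle\le\frac{3\eta}{2}\,\mathbb{E}\|\Delta_k\|_{H^{-1}}^2+\epsilon_k.$$
   Context: Setting. $F(x)=f(x)+h(x)$ on $\mathbb{R}^d$, where $f=\frac1n\sum_{i=1}^n f_i$ with each $f_i:\mathbb{R}^d\to\mathbb{R}$ convex and differentiable, and $h:\mathbb{R}^d\to\mathbb{R}\cup\{+\infty\}$ is proper, convex, lower semicontinuous, with closed domain $\mathrm{dom}\,h$. $H$ is a fixed symmetric positive definite $d\times d$ matrix; $\langle x,y\rangle_H=x^\top Hy$, $\|x\|_H=\sqrt{x^\top Hx}$, $\|x\|_{H^{-1}}=\sqrt{x^\top H^{-1}x}$, and $\langle x,y\rangle=x^\top y$. Assumption 1: each $f_i$ is $L_i$-smooth w.r.t. the $H$-norm, i.e. $\|\nabla f_i(x)-\nabla f_i(y)\|_{H^{-1}}\le L_i\|x-y\|_H$ for all $x,y$; $L_{\mathrm{avg}}=\frac1n\sum_{i=1}^nL_i$. Assumption 2: $f$ is $\mu$-strongly convex w.r.t. the $H$-norm for some $\mu>0$, i.e. $f(y)\ge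 f(x)+\langle\nabla f(x),y-x\rangle+\frac\mu2\|y-x\|_H^2$ for all $x,y$. Subproblem: for $y,v\in\mathbb{R}^d$ and $\eta>0$ let $q(x)=h(x)+\frac1{2\eta}\|x-y+\eta H^{-1}v\|_H^2$; a point $x^+$ is an $\epsilon$-optimal solution if $q(x^+)\le\min_x q(x)+\epsilon$. Algorithm 2 (one outer iteration $s$, given $\tilde x_s$ and parameters $\eta,\tau\in(0,1),\mu,b,T$ and tolerances $\epsilon_0,\dots,\epsilon_{T-1}\ge0$): compute $\nabla f(\tilde x_s)$; set $x_0=z_0=\tilde x_s$; for $k=0,\dots,T-1$: $y_k=\frac{1}{1+\tau}x_k+\frac{\tau}{1+\tau}z_k$; draw a mini-batch $\mathcal{B}_k$ of $b$ indices sampled independently (of each other and of the past) from $\{1,\dots,n\}$ with $\Pr(i)=p_i=L_i/(nL_{\mathrm{avg}})$; $v_k=\frac1b\sum_{i\in\mathcal B_k}\frac{\nabla f_i(y_k)-\nabla f_i(\tilde x_s)}{np_i}+\nabla f(\tilde x_s)$; let $x_{k+1}$ be an $\epsilon_k$-optimal solution of the subproblem with $y=y_k$, $v=v_k$; $g_{k+1}=(y_k-x_{k+1})/\eta$; $z_{k+1}=z_k+\tau(y_k-z_k)-\frac\tau\mu g_{k+1}$. Finally $\tilde x_{s+1}=x_T$. Expectations are over the mini-batch randomness. *)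

theory Defs
  imports "HOL-Analysis.Analysis" "HOL-Probability.Probability"
begin

definition wnorm :: "real^'n^'n \<Rightarrow> real^'n \<Rightarrow> real" where
  "wnorm M x = sqrt (x \<bullet> (M *v x))"

definition sym_pos_def_mat :: "real^'n^'n \<Rightarrow> bool" where
  "sym_pos_def_mat M \<longleftrightarrow> transpose M = M \<and> (\<forall>x. x \<noteq> 0 \<longrightarrow> x \<bullet> (M *v x) > 0)"

definition edom :: "('a \<Rightarrow> ereal) \<Rightarrow> 'a set" where
  "edom h = {x. h x < \<infinity>}"

definition proper_fun :: "('a \<Rightarrow> ereal) \<Rightarrow> bool" where
  "proper_fun h \<longleftrightarrow> (\<forall>x. h x \<noteq> -\<infinity>) \<and> edom h \<noteq> {}"

definition econvex :: "('a::real_vector \<Rightarrow> ereal) \<Rightarrow> bool" where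
  "econvex h \<longleftrightarrow> (\<forall>x y t. 0 < t \<and> t < 1 \<longrightarrow>
      h ((1 - t) *\<^sub>R x + t *\<^sub>R y) \<le> ereal (1 - t) * h x + ereal t * h y)"

definition lsc_fun :: "('a::topological_space \<Rightarrow> ereal) \<Rightarrow> bool" where
  "lsc_fun h \<longleftrightarrow> (\<forall>x. h x \<le> Liminf (at x) h)"

definition subprob :: "(real^'n \<Rightarrow> ereal) \<Rightarrow> real^'n^'n \<Rightarrow> real \<Rightarrow> real^'n \<Rightarrow> real^'n \<Rightarrow> real^'n \<Rightarrow> ereal" where
  "subprob h H eta y v x =
     h x + ereal (1 / (2 * eta) * (wnorm H (x - y + eta *\<^sub>R (matrix_inv H *v v)))\<^sup>2)"

definition eps_opt :: "(real^'n \<Rightarrow> ereal) \<Rightarrow> real^'n^'n \<Rightarrow> real \<Rightarrow> real^'n \<Rightarrow> real^'n \<Rightarrow> real \<Rightarrow> real^'n \<Rightarrow> bool" where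
  "eps_opt h H eta y v eps xp \<longleftrightarrow>
     subprob h H eta y v xp \<le> (INF x. subprob h H eta y v x) + ereal eps"

text \<open>Index i in {0..<n} (standing for the paper's {1..n}) drawn with probability
  p_i = L_i / (n L_avg).\<close>
definition Lavg :: "nat \<Rightarrow> (nat \<Rightarrow> real) \<Rightarrow> real" where
  "Lavg n L = (\<Sum>i<n. L i) / real n"

definition prob_i :: "nat \<Rightarrow> (nat \<Rightarrow> real) \<Rightarrow> nat \<Rightarrow> real" where
  "prob_i n L i = L i / (real n * Lavg n L)"

definition index_pmf :: "nat \<Rightarrow> (nat \<Rightarrow> real) \<Rightarrow> nat pmf" where
  "index_pmf n L = embed_pmf (\<lambda>i. if i < n then prob_i n L i else 0)"

definition batch_pmf :: "nat \<Rightarrow> (nat \<Rightarrow> real) \<Rightarrow> nat \<Rightarrow> nat list pmf" where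
  "batch_pmf n L b = replicate_pmf b (index_pmf n L)"

definition fgrad :: "nat \<Rightarrow> (nat \<Rightarrow> real^'n \<Rightarrow> real^'n) \<Rightarrow> real^'n \<Rightarrow> real^'n" where
  "fgrad n gf x = (1 / real n) *\<^sub>R (\<Sum>i<n. gf i x)"

definition y_of :: "real \<Rightarrow> real^'n \<Rightarrow> real^'n \<Rightarrow> real^'n" where
  "y_of tau x z = (1 / (1 + tau)) *\<^sub>R x + (tau / (1 + tau)) *\<^sub>R z"

definition vr_grad :: "nat \<Rightarrow> (nat \<Rightarrow> real) \<Rightarrow> (nat \<Rightarrow> real^'n \<Rightarrow> real^'n) \<Rightarrow> nat \<Rightarrow> real^'n
    \<Rightarrow> nat list \<Rightarrow> real^'n \<Rightarrow> real^'n" where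
  "vr_grad n L gf b xt B y =
     (1 / real b) *\<^sub>R
       (\<Sum>i\<leftarrow>B. (1 / (real n * prob_i n L i)) *\<^sub>R (gf i y - gf i xt))
     + fgrad n gf xt"

text \<open>sel Bs is the point x_{k+1} returned by the (inexact) subproblem solver when
  Bs = [B_0,...,B_k] are the mini-batches drawn so far; the solver may depend on the
  whole history. traj ... Bs k = (x_k, z_k).\<close>
fun traj :: "nat \<Rightarrow> (nat \<Rightarrow> real) \<Rightarrow> (nat \<Rightarrow> real^'n \<Rightarrow> real^'n) \<Rightarrow> real \<Rightarrow> real \<Rightarrow> real
    \<Rightarrow> real^'n \<Rightarrow> (nat list list \<Rightarrow> real^'n) \<Rightarrow> nat list list \<Rightarrow> nat \<Rightarrow> (real^'n) \<times> (real^'n)" where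
  "traj n L gf eta tau mu xt sel Bs 0 = (xt, xt)"
| "traj n L gf eta tau mu xt sel Bs (Suc k) =
     (let (x, z) = traj n L gf eta tau mu xt sel Bs k;
          y = y_of tau x z;
          x' = sel (take (Suc k) Bs);
          g = (1 / eta) *\<^sub>R (y - x')
      in (x', z + tau *\<^sub>R (y - z) - (tau / mu) *\<^sub>R g))"

end

theory Submission
  imports Defs
begin

definition Nq :: "real^'n^'n \<Rightarrow> real^'n \<Rightarrow> real" where
  "Nq H w = w \<bullet> (H *v w)"

lemma spd_psd: "sym_pos_def_mat H \<Longrightarrow> 0 \<le> x \<bullet> (H *v x)"
  unfolding sym_pos_def_mat_def by (cases "x = 0") (auto intro: less_imp_le)

lemma spd_sym: "sym_pos_def_mat H \<Longrightarrow> a \<bullet> (H *v b) = b \<bullet> (H *v a)"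
proof -
  assume S: "sym_pos_def_mat H"
  have "a \<bullet> (H *v b) = (a v* H) \<bullet> b" by (simp add: dot_lmul_matrix)
  also have "a v* H = transpose H *v a" by simp
  also have "transpose H = H" using S by (simp add: sym_pos_def_mat_def)
  finally show ?thesis by (simp add: inner_commute)
qed

lemma wnorm_sq: "sym_pos_def_mat H \<Longrightarrow> (wnorm H x)\<^sup>2 = Nq H x"
  unfolding wnorm_def Nq_def using spd_psd by simp

lemma spd_inv: assumes S: "sym_pos_def_mat H" shows "H ** matrix_inv H = mat 1"
proof -
  have "\<forall>x. H *v x = 0 \<longrightarrow> x = 0"
    using S unfolding sym_pos_def_mat_def by (metis inner_zero_right less_irrefl)
  then obtain B where "B ** H = mat 1" using matrix_left_invertible_ker by blast
  then have "H ** B = mat 1 \<and> B ** H = mat 1" using matrix_left_right_inverse by blast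
  then show ?thesis unfolding matrix_inv_def by (rule someI2) blast
qed

lemma spd_inv_v: "sym_pos_def_mat H \<Longrightarrow> H *v (matrix_inv H *v x) = x"
  by (simp add: matrix_vector_mul_assoc spd_inv)

lemma Nq_inv: assumes S: "sym_pos_def_mat H"
  shows "Nq H (matrix_inv H *v d) = d \<bullet> (matrix_inv H *v d)"
  unfolding Nq_def by (simp add: spd_inv_v[OF S] inner_commute)

lemma inv_psd: "sym_pos_def_mat H \<Longrightarrow> 0 \<le> d \<bullet> (matrix_inv H *v d)"
  by (metis Nq_def Nq_inv spd_psd)

lemma Nq_diff: assumes S: "sym_pos_def_mat H"
  shows "Nq H (a - b) = Nq H a - 2 * (a \<bullet> (H *v b)) + Nq H b"
  unfolding Nq_def using spd_sym[OF S, of b a]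
  by (simp add: matrix_vector_mult_diff_distrib inner_diff_left inner_diff_right)

lemma Nq_add: assumes S: "sym_pos_def_mat H"
  shows "Nq H (a + b) = Nq H a + 2 * (a \<bullet> (H *v b)) + Nq H b"
  unfolding Nq_def using spd_sym[OF S, of b a]
  by (simp add: matrix_vector_right_distrib inner_add_left inner_add_right)

lemma Nq_scale: "Nq H (c *\<^sub>R a) = c^2 * Nq H a"
  unfolding Nq_def by (simp add: matrix_vector_mult_scaleR power2_eq_square)

lemma Nq_minus: "Nq H (a - b) = Nq H (b - a)"
proof -
  have "a - b = (-1) *\<^sub>R (b - a)" by simp
  then show ?thesis by (simp only: Nq_scale) simp
qed

lemma Nq_convex: assumes S: "sym_pos_def_mat H"
  shows "Nq H ((1 - t) *\<^sub>R A + t *\<^sub>R B) = (1 - t) * Nq H A + t * Nq H B - t * (1 - t) * Nq H (A - B)"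
proof -
  have "Nq H ((1 - t) *\<^sub>R A + t *\<^sub>R B) = (1-t)^2 * Nq H A + 2 * ((1-t) * t * (A \<bullet> (H *v B))) + t^2 * Nq H B"
    by (simp add: Nq_add[OF S] Nq_scale matrix_vector_mult_scaleR)
  also have "\<dots> = (1 - t) * Nq H A + t * Nq H B - t * (1 - t) * Nq H (A - B)"
    by (simp add: Nq_diff[OF S] power2_eq_square algebra_simps)
  finally show ?thesis .
qed

lemma amgm_H: assumes S: "sym_pos_def_mat H" and mu: "mu > 0"
  shows "w \<bullet> d \<le> mu / 2 * (d \<bullet> (matrix_inv H *v d)) + Nq H w / (2 * mu)"
proof -
  define c where "c = matrix_inv H *v d"
  have "0 \<le> Nq H (mu *\<^sub>R c - w)" unfolding Nq_def using spd_psd[OF S] by blast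
  also have "Nq H (mu *\<^sub>R c - w) = mu^2 * Nq H c - 2 * mu * (c \<bullet> (H *v w)) + Nq H w"
    by (simp add: Nq_diff[OF S] Nq_scale matrix_vector_mult_scaleR)
  also have "c \<bullet> (H *v w) = w \<bullet> d" using spd_sym[OF S, of c w] spd_inv_v[OF S, of d]
    by (simp add: c_def)
  also have "Nq H c = d \<bullet> (matrix_inv H *v d)" by (simp add: c_def Nq_inv[OF S])
  finally have "2 * mu * (w \<bullet> d) \<le> mu^2 * (d \<bullet> (matrix_inv H *v d)) + Nq H w" by simp
  then show ?thesis using mu by (simp add: field_simps power2_eq_square)
qed

definition Qf :: "real^'n^'n \<Rightarrow> real \<Rightarrow> real^'n \<Rightarrow> real^'n \<Rightarrow> real^'n \<Rightarrow> real" where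
  "Qf H eta y v z = (1 / (2 * eta)) * Nq H (z - y + eta *\<^sub>R (matrix_inv H *v v))"

lemma subprob_eq: "sym_pos_def_mat H \<Longrightarrow> subprob h H eta y v z = h z + ereal (Qf H eta y v z)"
  unfolding subprob_def Qf_def by (simp add: wnorm_sq)

lemma Qf_shift: assumes S: "sym_pos_def_mat H" and eta: "eta > 0"
  shows "Qf H eta y v z = Qf H eta y g z + (z - y + eta *\<^sub>R (matrix_inv H *v g)) \<bullet> (v - g)
            + eta / 2 * ((v - g) \<bullet> (matrix_inv H *v (v - g)))"
proof -
  define w where "w = z - y + eta *\<^sub>R (matrix_inv H *v g)"
  define c where "c = matrix_inv H *v (v - g)"
  have e: "z - y + eta *\<^sub>R (matrix_inv H *v v) = w + eta *\<^sub>R c"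
    by (simp add: w_def c_def matrix_vector_mult_diff_distrib algebra_simps)
  have "Nq H (w + eta *\<^sub>R c) = Nq H w + 2 * (eta * (w \<bullet> (v - g))) + eta^2 * ((v - g) \<bullet> (matrix_inv H *v (v - g)))"
    by (simp add: Nq_add[OF S] Nq_scale matrix_vector_mult_scaleR c_def spd_inv_v[OF S] Nq_inv[OF S])
  moreover have "Qf H eta y g z = Nq H w / (2*eta)" by (simp add: Qf_def w_def)
  moreover have "Qf H eta y v z = Nq H (w + eta *\<^sub>R c) / (2*eta)" by (simp add: Qf_def e)
  ultimately have "eta * (2 * Qf H eta y v z) = eta * (2 * Qf H eta y g z + 2 * (w \<bullet> (v - g))
            + eta * ((v - g) \<bullet> (matrix_inv H *v (v - g))))"
    using eta by (simp add: field_simps power2_eq_square)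
  then have "2 * Qf H eta y v z = 2 * Qf H eta y g z + 2 * (w \<bullet> (v - g))
            + eta * ((v - g) \<bullet> (matrix_inv H *v (v - g)))" using eta by simp
  then have "Qf H eta y v z = Qf H eta y g z + w \<bullet> (v - g)
            + eta / 2 * ((v - g) \<bullet> (matrix_inv H *v (v - g)))" by simp
  then show ?thesis by (simp add: w_def)
qed

lemma F1:
  assumes S: "sym_pos_def_mat H" and hc: "econvex h" and hp: "proper_fun h" and eta: "eta > 0"
    and t: "0 < t" "t < 1"
    and popt: "subprob h H eta y v p \<le> (INF x. subprob h H eta y v x) + ereal \<delta>"
    and hpv: "h p = ereal hp" and hwv: "h w = ereal hw"
  shows "t * (1 - t) / (2 * eta) * Nq H (w - p)
          \<le> t * ((hw + Qf H eta y v w) - (hp + Qf H eta y v p)) + \<delta>"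
proof -
  define z where "z = (1 - t) *\<^sub>R p + t *\<^sub>R w"
  have "h z \<le> ereal (1 - t) * h p + ereal t * h w"
    using hc t unfolding econvex_def z_def by blast
  also have "\<dots> = ereal ((1 - t) * hp + t * hw)" by (simp add: hpv hwv)
  finally have hz1: "h z \<le> ereal ((1 - t) * hp + t * hw)" .
  have "h z \<noteq> -\<infinity>" using hp unfolding proper_fun_def by blast
  then obtain hz where hzv: "h z = ereal hz" using hz1
    by (cases "h z") auto
  have hz: "hz \<le> (1 - t) * hp + t * hw" using hz1 hzv by simp
  have "ereal (hp + Qf H eta y v p) = subprob h H eta y v p" by (simp add: subprob_eq[OF S] hpv)
  also have "\<dots> \<le> (INF x. subprob h H eta y v x) + ereal \<delta>" by (rule popt)
  also have "\<dots> \<le> subprob h H eta y v z + ereal \<delta>" by (intro add_right_mono INF_lower) auto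
  also have "\<dots> = ereal (hz + Qf H eta y v z + \<delta>)" by (simp add: subprob_eq[OF S] hzv)
  finally have main: "hp + Qf H eta y v p \<le> hz + Qf H eta y v z + \<delta>" by simp
  define A where "A = p - y + eta *\<^sub>R (matrix_inv H *v v)"
  define B where "B = w - y + eta *\<^sub>R (matrix_inv H *v v)"
  have zA: "z - y + eta *\<^sub>R (matrix_inv H *v v) = (1 - t) *\<^sub>R A + t *\<^sub>R B"
    by (simp add: z_def A_def B_def algebra_simps)
  have AB: "A - B = p - w" by (simp add: A_def B_def)
  have Qz: "Qf H eta y v z = (1 - t) * Qf H eta y v p + t * Qf H eta y v w
      - t * (1 - t) / (2 * eta) * Nq H (w - p)"
  proof -
    have "Qf H eta y v p = Nq H A / (2*eta)" by (simp add: Qf_def A_def)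
    moreover have "Qf H eta y v w = Nq H B / (2*eta)" by (simp add: Qf_def B_def)
    moreover have "Qf H eta y v z = Nq H ((1 - t) *\<^sub>R A + t *\<^sub>R B) / (2*eta)" by (simp add: Qf_def zA)
    ultimately show ?thesis unfolding Nq_convex[OF S] AB using Nq_minus[of H p w] eta
      by (simp add: field_simps)
  qed
  show ?thesis using main hz Qz by (simp add: algebra_simps)
qed

lemma opt_fin:
  assumes S: "sym_pos_def_mat H" and hp: "proper_fun h" and o: "eps_opt h H eta y v e x"
  shows "\<exists>hx. h x = ereal hx" "\<exists>m. (INF z. subprob h H eta y v z) = ereal m"
proof -
  obtain x0 where x0: "h x0 < \<infinity>" using hp unfolding proper_fun_def edom_def by auto
  have "(INF z. subprob h H eta y v z) \<le> subprob h H eta y v x0" by (rule INF_lower) auto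
  also have "\<dots> < \<infinity>" using x0 by (simp add: subprob_eq[OF S])
  finally have Ilt: "(INF z. subprob h H eta y v z) < \<infinity>" .
  have sx: "subprob h H eta y v x \<le> (INF z. subprob h H eta y v z) + ereal e"
    using o unfolding eps_opt_def .
  have hxm: "h x \<noteq> -\<infinity>" using hp unfolding proper_fun_def by blast
  have "(INF z. subprob h H eta y v z) + ereal e < \<infinity>" using Ilt by simp
  then have "subprob h H eta y v x < \<infinity>" using sx by (rule le_less_trans[rotated])
  then have "h x < \<infinity>" by (simp add: subprob_eq[OF S])
  then show "\<exists>hx. h x = ereal hx" using hxm by (cases "h x") auto
  then obtain hx where hx: "h x = ereal hx" ..
  have "(INF z. subprob h H eta y v z) \<noteq> -\<infinity>"
  proof
    assume "(INF z. subprob h H eta y v z) = -\<infinity>"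
    then show False using sx by (simp add: subprob_eq[OF S] hx)
  qed
  then show "\<exists>m. (INF z. subprob h H eta y v z) = ereal m" using Ilt
    by (cases "(INF z. subprob h H eta y v z)") auto
qed

lemma opt_exists:
  assumes "(INF z. subprob h H eta y v z) = ereal m" and "\<delta> > 0"
  shows "\<exists>p. eps_opt h H eta y v \<delta> p"
proof -
  have "(INF z. subprob h H eta y v z) < ereal (m + \<delta>)" using assms by simp
  then obtain p where "subprob h H eta y v p < ereal (m + \<delta>)" by (auto simp: INF_less_iff)
  then show ?thesis unfolding eps_opt_def using assms by (intro exI[of _ p]) simp
qed

lemma pointwise:
  assumes S: "sym_pos_def_mat H" and hc: "econvex h" and hp: "proper_fun h" and eta: "eta > 0"
    and t: "0 < t" "t < 1" and dlt: "\<delta> > 0"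
    and xopt: "eps_opt h H eta y v \<epsilon> x"
    and pbopt: "eps_opt h H eta y g \<delta> pb"
  shows "(pb - x) \<bullet> (v - g) \<le> 3 * eta / (2 * (1 - t)) * ((v - g) \<bullet> (matrix_inv H *v (v - g)))
            + \<epsilon> + 3 * \<delta> / t"
proof -
  define D where "D = (v - g) \<bullet> (matrix_inv H *v (v - g))"
  obtain hx where hx: "h x = ereal hx" using opt_fin[OF S hp xopt] by blast
  obtain hpb where hpb: "h pb = ereal hpb" using opt_fin[OF S hp pbopt] by blast
  obtain m where m: "(INF z. subprob h H eta y v z) = ereal m" using opt_fin[OF S hp xopt] by blast
  obtain p where popt: "eps_opt h H eta y v \<delta> p" using opt_exists[OF m dlt] by blast
  obtain hpp where hpp: "h p = ereal hpp" using opt_fin[OF S hp popt] by blast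
  define Qv where "Qv = Qf H eta y v"
  define Qg where "Qg = Qf H eta y g"
  have sh: "\<And>z. Qv z = Qg z + (z - y + eta *\<^sub>R (matrix_inv H *v g)) \<bullet> (v - g) + eta / 2 * D"
    unfolding Qv_def Qg_def D_def by (rule Qf_shift[OF S eta])
  have i1: "t * (1 - t) / (2 * eta) * Nq H (x - p) \<le> t * ((hx + Qv x) - (hpp + Qv p)) + \<delta>"
    unfolding Qv_def by (rule F1[OF S hc hp eta t _ hpp hx]) (use popt in \<open>simp add: eps_opt_def\<close>)
  have "ereal (hx + Qv x) \<le> (INF z. subprob h H eta y v z) + ereal \<epsilon>"
    using xopt by (simp add: eps_opt_def subprob_eq[OF S] hx Qv_def)
  also have "\<dots> \<le> subprob h H eta y v p + ereal \<epsilon>" by (intro add_right_mono INF_lower) auto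
  also have "\<dots> = ereal (hpp + Qv p + \<epsilon>)" by (simp add: subprob_eq[OF S] hpp Qv_def)
  finally have i2: "(hx + Qv x) - (hpp + Qv p) \<le> \<epsilon>" by simp
  have ii1: "t * (1 - t) / (2 * eta) * Nq H (pb - p) \<le> t * ((hpb + Qv pb) - (hpp + Qv p)) + \<delta>"
    unfolding Qv_def by (rule F1[OF S hc hp eta t _ hpp hpb]) (use popt in \<open>simp add: eps_opt_def\<close>)
  have ii2: "t * (1 - t) / (2 * eta) * Nq H (p - pb) \<le> t * ((hpp + Qg p) - (hpb + Qg pb)) + \<delta>"
    unfolding Qg_def by (rule F1[OF S hc hp eta t _ hpb hpp]) (use pbopt in \<open>simp add: eps_opt_def\<close>)
  have lin: "(Qv pb - Qg pb) - (Qv p - Qg p) = (pb - p) \<bullet> (v - g)"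
    using sh[of pb] sh[of p] by (simp add: inner_diff_left algebra_simps)
  define a where "a = Nq H (pb - p)"
  define s where "s = Nq H (p - x)"
  define r where "r = (pb - p) \<bullet> (v - g)"
  define q where "q = (p - x) \<bullet> (v - g)"
  have np: "Nq H (p - pb) = a" unfolding a_def by (rule Nq_minus)
  have nx: "Nq H (x - p) = s" unfolding s_def by (rule Nq_minus)
  have A: "t * (1 - t) / eta * a \<le> t * r + 2 * \<delta>"
  proof -
    have "2 * (t * (1 - t) / (2 * eta) * a) \<le> t * ((hpb + Qv pb) - (hpp + Qv p)) + t * ((hpp + Qg p) - (hpb + Qg pb)) + 2 * \<delta>"
      using ii1 ii2 unfolding np a_def[symmetric] by linarith
    also have "t * ((hpb + Qv pb) - (hpp + Qv p)) + t * ((hpp + Qg p) - (hpb + Qg pb)) = t * r"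
      unfolding r_def lin[symmetric] by (simp add: algebra_simps)
    finally show ?thesis by simp
  qed
  have Bs: "t * (1 - t) / (2 * eta) * s \<le> t * \<epsilon> + \<delta>"
  proof -
    have "t * ((hx + Qv x) - (hpp + Qv p)) \<le> t * \<epsilon>" using i2 t by (simp add: mult_left_mono)
    then show ?thesis using i1 unfolding nx by linarith
  qed
  have k: "1 - t > 0" using t by simp
  have mu: "eta / (1 - t) > 0" using eta k by simp
  have amr: "r \<le> eta / (1 - t) / 2 * D + a / (2 * (eta / (1 - t)))"
    unfolding r_def a_def D_def by (rule amgm_H[OF S mu])
  have amq: "q \<le> eta / (1 - t) / 2 * D + s / (2 * (eta / (1 - t)))"
    unfolding q_def s_def D_def by (rule amgm_H[OF S mu])
  have A': "a / (2 * (eta / (1 - t))) \<le> r / 2 + \<delta> / t"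
  proof -
    have "a / (2 * (eta / (1 - t))) = (t * (1 - t) / eta * a) / (2 * t)" using t eta k by (simp add: field_simps)
    also have "\<dots> \<le> (t * r + 2 * \<delta>) / (2 * t)" by (rule divide_right_mono[OF A]) (use t in simp)
    also have "\<dots> = r / 2 + \<delta> / t" using t by (simp add: field_simps)
    finally show ?thesis .
  qed
  have B': "s / (2 * (eta / (1 - t))) \<le> \<epsilon> + \<delta> / t"
  proof -
    have "s / (2 * (eta / (1 - t))) = (t * (1 - t) / (2 * eta) * s) / t" using t eta k by (simp add: field_simps)
    also have "\<dots> \<le> (t * \<epsilon> + \<delta>) / t" by (rule divide_right_mono[OF Bs]) (use t in simp)
    also have "\<dots> = \<epsilon> + \<delta> / t" using t by (simp add: field_simps)
    finally show ?thesis .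
  qed
  have "(pb - x) \<bullet> (v - g) = r + q" unfolding r_def q_def by (simp add: inner_diff_left)
  also have "\<dots> \<le> 3 * (eta / (1 - t) / 2 * D) + \<epsilon> + 3 * (\<delta> / t)" 
  proof -
    define X where "X = eta / (1 - t) / 2 * D"
    define Y where "Y = \<delta> / t"
    define U where "U = a / (2 * (eta / (1 - t)))"
    define V where "V = s / (2 * (eta / (1 - t)))"
    have "r \<le> X + U" "q \<le> X + V" "U \<le> r / 2 + Y" "V \<le> \<epsilon> + Y"
      using amr amq A' B' unfolding X_def Y_def U_def V_def by auto
    then have "r + q \<le> 3 * X + \<epsilon> + 3 * Y" by linarith
    then show ?thesis unfolding X_def Y_def .
  qed
  also have "\<dots> = 3 * eta / (2 * (1 - t)) * D + \<epsilon> + 3 * \<delta> / t" by (simp add: field_simps)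
  finally show ?thesis unfolding D_def .
qed

lemma finite_rep: "finite (set_pmf P) \<Longrightarrow> finite (set_pmf (replicate_pmf k P))"
  unfolding set_replicate_pmf
  by (rule finite_subset[OF _ finite_lists_length_eq[of "set_pmf P" k]]) (auto simp: lists_eq_set)

lemma exp_bind:
  fixes h :: "'b \<Rightarrow> real"
  assumes "finite (set_pmf p)" "\<And>x. x \<in> set_pmf p \<Longrightarrow> finite (set_pmf (f x))"
  shows "measure_pmf.expectation (p \<bind> f) h = measure_pmf.expectation p (\<lambda>x. measure_pmf.expectation (f x) h)"
proof -
  have "measure_pmf.expectation (p \<bind> f) h = (\<Sum>a\<in>set_pmf p. pmf p a *\<^sub>R measure_pmf.expectation (f a) h)"
    using assms by (intro pmf_expectation_bind) auto
  also have "\<dots> = measure_pmf.expectation p (\<lambda>x. measure_pmf.expectation (f x) h)"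
    using assms by (subst integral_measure_pmf[of "set_pmf p"]) auto
  finally show ?thesis .
qed

lemma rep_Suc_split:
  fixes f :: "'a list \<Rightarrow> real"
  assumes fin: "finite (set_pmf P)"
  shows "measure_pmf.expectation (replicate_pmf (Suc k) P) f
       = measure_pmf.expectation (replicate_pmf k P) (\<lambda>pre. measure_pmf.expectation P (\<lambda>B. f (pre @ [B])))"
proof -
  have "replicate_pmf (Suc k) P = replicate_pmf (k + 1) P" by simp
  also have "\<dots> = replicate_pmf k P \<bind> (\<lambda>xs. map_pmf (\<lambda>B. xs @ [B]) P)"
    unfolding replicate_pmf_distrib replicate_pmf_1
    by (simp add: bind_map_pmf map_pmf_def bind_assoc_pmf bind_return_pmf)
  finally have e: "replicate_pmf (Suc k) P = replicate_pmf k P \<bind> (\<lambda>xs. map_pmf (\<lambda>B. xs @ [B]) P)" .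
  show ?thesis unfolding e
    by (subst exp_bind) (auto simp: finite_rep[OF fin] fin)
qed

lemma rep_sum_list:
  fixes psi :: "'a \<Rightarrow> real"
  assumes fin: "finite (set_pmf Q)"
  shows "measure_pmf.expectation (replicate_pmf b Q) (\<lambda>B. sum_list (map psi B))
         = real b * measure_pmf.expectation Q psi"
proof (induction b)
  case 0
  then show ?case by simp
next
  case (Suc b)
  have e: "replicate_pmf (Suc b) Q = Q \<bind> (\<lambda>x. map_pmf (\<lambda>xs. x # xs) (replicate_pmf b Q))"
    by (simp add: map_pmf_def)
  have "measure_pmf.expectation (replicate_pmf (Suc b) Q) (\<lambda>B. sum_list (map psi B))
      = measure_pmf.expectation Q (\<lambda>x. measure_pmf.expectation (replicate_pmf b Q) (\<lambda>xs. psi x + sum_list (map psi xs)))"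
    unfolding e by (subst exp_bind) (auto simp: finite_rep[OF fin] fin)
  also have "\<dots> = measure_pmf.expectation Q (\<lambda>x. psi x + real b * measure_pmf.expectation Q psi)"
  proof -
    have "\<And>x. measure_pmf.expectation (replicate_pmf b Q) (\<lambda>xs. psi x + sum_list (map psi xs))
       = psi x + real b * measure_pmf.expectation Q psi"
    proof -
      fix x
      have "measure_pmf.expectation (replicate_pmf b Q) (\<lambda>xs. psi x + sum_list (map psi xs))
         = measure_pmf.expectation (replicate_pmf b Q) (\<lambda>_. psi x) + measure_pmf.expectation (replicate_pmf b Q) (\<lambda>xs. sum_list (map psi xs))"
        by (rule Bochner_Integration.integral_add) (auto simp: integrable_measure_pmf_finite finite_rep[OF fin])
      then show "measure_pmf.expectation (replicate_pmf b Q) (\<lambda>xs. psi x + sum_list (map psi xs))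
       = psi x + real b * measure_pmf.expectation Q psi" by (simp add: Suc.IH)
    qed
    then show ?thesis by simp
  qed
  also have "\<dots> = real (Suc b) * measure_pmf.expectation Q psi"
    by (subst Bochner_Integration.integral_add) (auto simp: integrable_measure_pmf_finite fin algebra_simps)
  finally show ?case .
qed

lemma index_facts:
  assumes n: "n > 0" and Lnn: "\<And>i. i < n \<Longrightarrow> 0 \<le> L i" and La: "Lavg n L > 0"
  shows "pmf (index_pmf n L) i = (if i < n then prob_i n L i else 0)"
    and "set_pmf (index_pmf n L) \<subseteq> {..<n}"
proof -
  define f where "f = (\<lambda>i. if i < n then prob_i n L i else 0)"
  have nn: "\<And>i. 0 \<le> f i" unfolding f_def prob_i_def using Lnn La n by auto
  have nL: "real n * Lavg n L = (\<Sum>i<n. L i)" unfolding Lavg_def using n by simp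
  have s1: "(\<Sum>i<n. f i) = 1"
  proof -
    have "(\<Sum>i<n. f i) = (\<Sum>i<n. L i / (real n * Lavg n L))" unfolding f_def prob_i_def by simp
    also have "\<dots> = (\<Sum>i<n. L i) / (real n * Lavg n L)" by (simp add: sum_divide_distrib)
    also have "\<dots> = 1" using nL La n by (metis divide_self mult_pos_pos of_nat_0_less_iff less_irrefl)
    finally show ?thesis .
  qed
  have pr: "(\<integral>\<^sup>+x. ennreal (f x) \<partial>count_space UNIV) = 1"
  proof -
    have "(\<integral>\<^sup>+x. ennreal (f x) \<partial>count_space UNIV) = (\<Sum>x<n. ennreal (f x))"
      by (rule nn_integral_count_space') (auto simp: f_def)
    also have "\<dots> = ennreal (\<Sum>x<n. f x)" using nn by (simp add: sum_ennreal)
    finally show ?thesis using s1 by simp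
  qed
  have p: "\<And>i. pmf (index_pmf n L) i = f i"
    unfolding index_pmf_def f_def[symmetric] using pmf_embed_pmf[OF nn pr] .
  show "pmf (index_pmf n L) i = (if i < n then prob_i n L i else 0)" using p f_def by simp
  show "set_pmf (index_pmf n L) \<subseteq> {..<n}" using p by (auto simp: set_pmf_eq f_def)
qed

lemma inner_sum_list: "(sum_list (map f B)) \<bullet> w = sum_list (map (\<lambda>i. f i \<bullet> w) B)"
  by (induction B) (auto simp: inner_add_left)

lemma batch_mean:
  fixes gf :: "nat \<Rightarrow> real^'d \<Rightarrow> real^'d"
  assumes n: "n > 0" and b: "b > 0" and Lnn: "\<And>i. i < n \<Longrightarrow> 0 \<le> L i" and La: "Lavg n L > 0"
    and Lz: "\<And>i x y. i < n \<Longrightarrow> L i = 0 \<Longrightarrow> gf i x = gf i y"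
  shows "measure_pmf.expectation (batch_pmf n L b)
          (\<lambda>B. (vr_grad n L gf b xt B y - fgrad n gf y) \<bullet> w) = 0"
proof -
  define Q where "Q = index_pmf n L"
  have finQ: "finite (set_pmf Q)" using index_facts(2)[OF n Lnn La] unfolding Q_def
    using finite_subset by blast
  define psi where "psi = (\<lambda>i. ((1 / (real n * prob_i n L i)) *\<^sub>R (gf i y - gf i xt)) \<bullet> w)"
  define c where "c = fgrad n gf xt \<bullet> w - fgrad n gf y \<bullet> w"
  have pt: "\<And>B. (vr_grad n L gf b xt B y - fgrad n gf y) \<bullet> w = (1 / real b) * sum_list (map psi B) + c"
    unfolding vr_grad_def psi_def c_def
    by (simp add: inner_diff_left inner_add_left inner_sum_list)
  have EQ: "measure_pmf.expectation Q psi = (fgrad n gf y - fgrad n gf xt) \<bullet> w"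
  proof -
    have "measure_pmf.expectation Q psi = (\<Sum>i<n. pmf Q i *\<^sub>R psi i)"
      using index_facts(2)[OF n Lnn La] unfolding Q_def
      by (intro integral_measure_pmf) auto
    also have "\<dots> = (\<Sum>i<n. (1 / real n) * ((gf i y - gf i xt) \<bullet> w))"
    proof (rule sum.cong[OF refl])
      fix i assume i: "i \<in> {..<n}"
      have pq: "pmf Q i = prob_i n L i" using index_facts(1)[OF n Lnn La, of i] i unfolding Q_def by simp
      show "pmf Q i *\<^sub>R psi i = (1 / real n) * ((gf i y - gf i xt) \<bullet> w)"
      proof (cases "prob_i n L i = 0")
        case True
        then have "L i = 0" unfolding prob_i_def using n La by simp
        then have "gf i y - gf i xt = 0" using Lz[of i y xt] i by simp
        then show ?thesis using True pq unfolding psi_def by simp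
      next
        case False
        then show ?thesis using pq n unfolding psi_def by (simp add: inner_diff_left)
      qed
    qed
    also have "\<dots> = (fgrad n gf y - fgrad n gf xt) \<bullet> w"
      unfolding fgrad_def
      by (simp add: inner_diff_left inner_sum_left sum_distrib_left sum_subtractf algebra_simps)
    finally show ?thesis .
  qed
  have "measure_pmf.expectation (batch_pmf n L b) (\<lambda>B. (vr_grad n L gf b xt B y - fgrad n gf y) \<bullet> w)
      = measure_pmf.expectation (replicate_pmf b Q) (\<lambda>B. (1 / real b) * sum_list (map psi B) + c)"
    unfolding batch_pmf_def Q_def pt ..
  also have "\<dots> = measure_pmf.expectation (replicate_pmf b Q) (\<lambda>B. (1 / real b) * sum_list (map psi B))
      + measure_pmf.expectation (replicate_pmf b Q) (\<lambda>_. c)"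
    by (rule Bochner_Integration.integral_add) (auto simp: integrable_measure_pmf_finite finite_rep[OF finQ])
  also have "\<dots> = (1 / real b) * (real b * measure_pmf.expectation Q psi) + c"
    by (simp add: rep_sum_list[OF finQ])
  also have "\<dots> = 0" using b EQ unfolding c_def by (simp add: inner_diff_left)
  finally show ?thesis .
qed

lemma traj_prefix:
  "m \<le> length pre \<Longrightarrow> traj n L gf eta tau mu xt sel (pre @ X) m = traj n L gf eta tau mu xt sel pre m"
  by (induction m) (auto simp: Let_def)

lemma inf_other:
  assumes S: "sym_pos_def_mat H" and hc: "econvex h" and hp: "proper_fun h" and eta: "eta > 0"
    and xopt: "eps_opt h H eta y v e x"
  shows "\<exists>m. (INF z. subprob h H eta y g z) = ereal m"
proof -
  obtain mv where mv: "(INF z. subprob h H eta y v z) = ereal mv" using opt_fin[OF S hp xopt] by blast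
  obtain p1 where p1: "eps_opt h H eta y v 1 p1" using opt_exists[OF mv, of 1] by auto
  obtain hp1 where hp1: "h p1 = ereal hp1" using opt_fin[OF S hp p1] by blast
  define D where "D = (v - g) \<bullet> (matrix_inv H *v (v - g))"
  define abar where "abar = y - eta *\<^sub>R (matrix_inv H *v g)"
  define C where "C = hp1 + Qf H eta y v p1 - 2 - eta * D - (p1 - abar) \<bullet> (v - g) - eta / 2 * D"
  have lb: "ereal C \<le> subprob h H eta y g z" for z
  proof (cases "h z = \<infinity>")
    case True
    then show ?thesis by (simp add: subprob_eq[OF S])
  next
    case False
    moreover have "h z \<noteq> -\<infinity>" using hp unfolding proper_fun_def by blast
    ultimately obtain hz where hz: "h z = ereal hz" by (cases "h z") auto
    have f1: "(1/2) * (1 - 1/2) / (2 * eta) * Nq H (z - p1)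
          \<le> (1/2) * ((hz + Qf H eta y v z) - (hp1 + Qf H eta y v p1)) + 1"
      by (rule F1[OF S hc hp eta _ _ _ hp1 hz]) (use p1 in \<open>auto simp: eps_opt_def\<close>)
    have sh: "Qf H eta y v z = Qf H eta y g z + (z - abar) \<bullet> (v - g) + eta / 2 * D"
      using Qf_shift[OF S eta, of y v z g] unfolding D_def abar_def by (simp add: algebra_simps)
    have am: "(z - p1) \<bullet> (v - g) \<le> (2 * eta) / 2 * D + Nq H (z - p1) / (2 * (2 * eta))"
      unfolding D_def by (rule amgm_H[OF S]) (use eta in simp)
    have spl: "(z - abar) \<bullet> (v - g) = (z - p1) \<bullet> (v - g) + (p1 - abar) \<bullet> (v - g)"
      by (simp add: inner_diff_left)
    define N where "N = Nq H (z - p1)"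
    have f1': "N / (4 * eta) - 2 \<le> (hz + Qf H eta y v z) - (hp1 + Qf H eta y v p1)"
    proof -
      have eq: "(1/2) * (1 - 1/2) / (2 * eta) * N = (1/2) * (N / (4 * eta))" by (simp add: field_simps)
      have "(1/2) * (N / (4 * eta)) \<le> (1/2) * ((hz + Qf H eta y v z) - (hp1 + Qf H eta y v p1)) + 1"
        using f1 unfolding N_def[symmetric] eq .
      moreover have "\<And>M R::real. 1/2*M \<le> 1/2*R + 1 \<Longrightarrow> M - 2 \<le> R" by linarith
      ultimately show ?thesis by blast
    qed
    have am': "(z - p1) \<bullet> (v - g) \<le> eta * D + N / (4 * eta)"
      using am unfolding N_def by (simp add: field_simps)
    have "C \<le> hz + Qf H eta y g z"
      using f1' am' sh spl unfolding C_def by linarith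
    then show ?thesis by (simp add: subprob_eq[OF S] hz)
  qed
  then have lbI: "ereal C \<le> (INF z. subprob h H eta y g z)" by (rule INF_greatest)
  obtain x0 where x0: "h x0 < \<infinity>" using hp unfolding proper_fun_def edom_def by auto
  have "(INF z. subprob h H eta y g z) \<le> subprob h H eta y g x0" by (rule INF_lower) auto
  also have "\<dots> < \<infinity>" using x0 by (simp add: subprob_eq[OF S])
  finally have "(INF z. subprob h H eta y g z) < \<infinity>" .
  with lbI show ?thesis by (cases "(INF z. subprob h H eta y g z)") auto
qed

theorem lemma5:
  fixes n b T k :: nat
    and fs :: "nat \<Rightarrow> real^'d \<Rightarrow> real"
    and gf :: "nat \<Rightarrow> real^'d \<Rightarrow> real^'d"
    and L :: "nat \<Rightarrow> real"
    and h :: "real^'d \<Rightarrow> ereal"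
    and H :: "real^'d^'d"
    and mu eta tau :: real
    and eps :: "nat \<Rightarrow> real"
    and xt :: "real^'d"
    and sel :: "nat list list \<Rightarrow> real^'d"
    and u :: "nat list list \<Rightarrow> real^'d"
  assumes n_pos: "n > 0"
    and b_pos: "b > 0"
    and H_spd: "sym_pos_def_mat H"
    and fs_convex: "\<And>i. i < n \<Longrightarrow> convex_on UNIV (fs i)"
    and fs_grad: "\<And>i x. i < n \<Longrightarrow> (fs i has_derivative (\<lambda>w. gf i x \<bullet> w)) (at x)"
    and smooth: "\<And>i x y. i < n \<Longrightarrow>
        wnorm (matrix_inv H) (gf i x - gf i y) \<le> L i * wnorm H (x - y)"
    and strong_convex: "mu > 0"
       "\<And>x y. (1 / real n) * (\<Sum>i<n. fs i y) \<ge> (1 / real n) * (\<Sum>i<n. fs i x)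
              + fgrad n gf x \<bullet> (y - x) + mu / 2 * (wnorm H (y - x))\<^sup>2"
    and h_proper: "proper_fun h"
    and h_convex: "econvex h"
    and h_lsc: "lsc_fun h"
    and h_dom_closed: "closed (edom h)"
    and eta: "0 < eta" "eta \<le> 1 / Lavg n L"
    and tau: "0 < tau" "tau < 1"
    and eps_nonneg: "\<And>j. eps j \<ge> 0"
    and sel_opt: "\<And>Bs j. j < T \<Longrightarrow> length Bs = Suc j \<Longrightarrow>
        (let xz = traj n L gf eta tau mu xt sel Bs j;
             y = y_of tau (fst xz) (snd xz);
             v = vr_grad n L gf b xt (Bs ! j) y
         in eps_opt h H eta y v (eps j) (sel Bs))"
    and k: "k < T"
  shows "measure_pmf.expectation (replicate_pmf (Suc k) (batch_pmf n L b))
           (\<lambda>Bs. let xz = traj n L gf eta tau mu xt sel Bs k;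
                     y = y_of tau (fst xz) (snd xz);
                     v = vr_grad n L gf b xt (Bs ! k) y;
                     \<Delta> = v - fgrad n gf y
                 in \<Delta> \<bullet> (u (take k Bs) - fst (traj n L gf eta tau mu xt sel Bs (Suc k))))
         \<le> 3 * eta / 2 *
           measure_pmf.expectation (replicate_pmf (Suc k) (batch_pmf n L b))
           (\<lambda>Bs. let xz = traj n L gf eta tau mu xt sel Bs k;
                     y = y_of tau (fst xz) (snd xz);
                     v = vr_grad n L gf b xt (Bs ! k) y;
                     \<Delta> = v - fgrad n gf y
                 in (wnorm (matrix_inv H) \<Delta>)\<^sup>2)
           + eps k"
proof -
  define P where "P = batch_pmf n L b"
  define e0 :: "real^'d" where "e0 = (\<chi> j. 1)"
  have e0: "e0 \<noteq> 0" by (simp add: e0_def vec_eq_iff)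
  have Lnn: "0 \<le> L i" if i: "i < n" for i
  proof -
    have a: "0 \<le> wnorm (matrix_inv H) (gf i 0 - gf i e0)"
      unfolding wnorm_def using inv_psd[OF H_spd] by simp
    have ne: "0 - e0 \<noteq> 0" using e0 by simp
    have "(0 - e0) \<bullet> (H *v (0 - e0)) > 0" using H_spd ne unfolding sym_pos_def_mat_def by blast
    then have b: "wnorm H (0 - e0) > 0" unfolding wnorm_def by simp
    from a smooth[OF i, of 0 e0] have "0 \<le> L i * wnorm H (0 - e0)" by linarith
    with b show ?thesis by (simp add: zero_le_mult_iff)
  qed
  have La: "Lavg n L > 0"
  proof -
    have "0 < 1 / Lavg n L" using eta by linarith
    then show ?thesis by (simp add: zero_less_divide_1_iff)
  qed
  have Lz: "gf i x = gf i y" if i: "i < n" and L0: "L i = 0" for i x y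
  proof -
    define d where "d = gf i x - gf i y"
    have "wnorm (matrix_inv H) d \<le> 0" using smooth[OF i, of x y] L0 unfolding d_def by simp
    then have "d \<bullet> (matrix_inv H *v d) = 0" unfolding wnorm_def using inv_psd[OF H_spd, of d] by simp
    then have "Nq H (matrix_inv H *v d) = 0" by (simp add: Nq_inv[OF H_spd])
    then have "matrix_inv H *v d = 0" using H_spd unfolding sym_pos_def_mat_def Nq_def
      by (metis less_irrefl)
    then have "d = 0" using spd_inv_v[OF H_spd, of d] by simp
    then show ?thesis unfolding d_def by simp
  qed
  have finP: "finite (set_pmf P)" unfolding P_def batch_pmf_def
    by (rule finite_rep) (use index_facts(2)[OF n_pos Lnn La] finite_subset in blast)
  have finR: "finite (set_pmf (replicate_pmf (Suc k) P))" by (rule finite_rep[OF finP])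
  define Yp where "Yp = (\<lambda>pre. y_of tau (fst (traj n L gf eta tau mu xt sel pre k)) (snd (traj n L gf eta tau mu xt sel pre k)))"
  define gb where "gb = (\<lambda>pre. fgrad n gf (Yp pre))"
  define Dl where "Dl = (\<lambda>Bs. vr_grad n L gf b xt (Bs ! k) (Yp (take k Bs)) - gb (take k Bs))"
  define pbar where "pbar = (\<lambda>(t::real) pre. SOME z. eps_opt h H eta (Yp pre) (gb pre) (t^2) z)"
  define G where "G = (\<lambda>t Bs. Dl Bs \<bullet> (u (take k Bs) - pbar t (take k Bs)))"
  define F where "F = (\<lambda>Bs. let xz = traj n L gf eta tau mu xt sel Bs k;
                     y = y_of tau (fst xz) (snd xz);
                     v = vr_grad n L gf b xt (Bs ! k) y;
                     \<Delta> = v - fgrad n gf y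
                 in \<Delta> \<bullet> (u (take k Bs) - fst (traj n L gf eta tau mu xt sel Bs (Suc k))))"
  define W where "W = (\<lambda>Bs. let xz = traj n L gf eta tau mu xt sel Bs k;
                     y = y_of tau (fst xz) (snd xz);
                     v = vr_grad n L gf b xt (Bs ! k) y;
                     \<Delta> = v - fgrad n gf y
                 in (wnorm (matrix_inv H) \<Delta>)\<^sup>2)"
  have supp: "length Bs = Suc k" if "Bs \<in> set_pmf (replicate_pmf (Suc k) P)" for Bs
    using that unfolding set_replicate_pmf by simp
  have tr: "traj n L gf eta tau mu xt sel Bs k = traj n L gf eta tau mu xt sel (take k Bs) k"
    if l: "length Bs = Suc k" for Bs
    using traj_prefix[of k "take k Bs" n L gf eta tau mu xt sel "drop k Bs"] l by simp
  have sx: "fst (traj n L gf eta tau mu xt sel Bs (Suc k)) = sel Bs" if l: "length Bs = Suc k" for Bs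
    using l by (simp add: Let_def split_def)
  have FW: "F Bs = Dl Bs \<bullet> (u (take k Bs) - sel Bs) \<and> W Bs = (wnorm (matrix_inv H) (Dl Bs))\<^sup>2"
    if l: "length Bs = Suc k" for Bs
    unfolding F_def W_def Dl_def gb_def Yp_def Let_def using tr[OF l] sx[OF l] by simp
  have xopt: "eps_opt h H eta (Yp (take k Bs)) (vr_grad n L gf b xt (Bs ! k) (Yp (take k Bs))) (eps k) (sel Bs)"
    if l: "length Bs = Suc k" for Bs
    using sel_opt[OF k l] unfolding Let_def Yp_def using tr[OF l] by simp
  have pbopt: "eps_opt h H eta (Yp (take k Bs)) (gb (take k Bs)) (t^2) (pbar t (take k Bs))"
    if l: "length Bs = Suc k" and t: "t > 0" for Bs t
  proof -
    obtain m where "(INF z. subprob h H eta (Yp (take k Bs)) (gb (take k Bs)) z) = ereal m"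
      using inf_other[OF H_spd h_convex h_proper eta(1) xopt[OF l]] by blast
    from opt_exists[OF this, of "t^2"] t
    have "\<exists>z. eps_opt h H eta (Yp (take k Bs)) (gb (take k Bs)) (t^2) z" by simp
    then show ?thesis unfolding pbar_def by (simp add: someI_ex)
  qed
  have pw: "F Bs \<le> G t Bs + (3 * eta / (2 * (1 - t)) * W Bs + eps k + 3 * t)"
    if l: "length Bs = Suc k" and t: "0 < t" "t < 1" for Bs t
  proof -
    have dl: "Dl Bs = vr_grad n L gf b xt (Bs ! k) (Yp (take k Bs)) - gb (take k Bs)" by (simp add: Dl_def)
    have p: "(pbar t (take k Bs) - sel Bs) \<bullet> Dl Bs \<le> 3 * eta / (2 * (1 - t)) * (Dl Bs \<bullet> (matrix_inv H *v Dl Bs))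
            + eps k + 3 * t^2 / t"
      unfolding dl by (rule pointwise[OF H_spd h_convex h_proper eta(1) t _ xopt[OF l] pbopt[OF l t(1)]])
        (use t in simp)
    have w: "W Bs = Dl Bs \<bullet> (matrix_inv H *v Dl Bs)"
      using FW[OF l] inv_psd[OF H_spd, of "Dl Bs"] unfolding wnorm_def by simp
    have Feq: "F Bs = G t Bs + (pbar t (take k Bs) - sel Bs) \<bullet> Dl Bs"
      using FW[OF l] unfolding G_def by (simp add: inner_diff_right inner_commute)
    have e3: "3 * t^2 / t = 3 * t" using t by (simp add: power2_eq_square)
    have p': "(pbar t (take k Bs) - sel Bs) \<bullet> Dl Bs \<le> 3 * eta / (2 * (1 - t)) * W Bs + eps k + 3 * t"
      using p unfolding w[symmetric] e3 .
    show ?thesis unfolding Feq by (rule add_left_mono[OF p'])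
  qed
  have EG: "measure_pmf.expectation (replicate_pmf (Suc k) P) (G t) = 0" for t
  proof -
    have "measure_pmf.expectation (replicate_pmf (Suc k) P) (G t)
        = measure_pmf.expectation (replicate_pmf k P) (\<lambda>pre. measure_pmf.expectation P (\<lambda>B. G t (pre @ [B])))"
      by (rule rep_Suc_split[OF finP])
    also have "\<dots> = 0"
    proof (subst integral_measure_pmf[of "{}"])
      fix pre assume pre: "pre \<in> set_pmf (replicate_pmf k P)"
        and nz: "measure_pmf.expectation P (\<lambda>B. G t (pre @ [B])) \<noteq> 0"
      have lp: "length pre = k" using pre unfolding set_replicate_pmf by simp
      have "measure_pmf.expectation P (\<lambda>B. G t (pre @ [B]))
          = measure_pmf.expectation P (\<lambda>B. (vr_grad n L gf b xt B (Yp pre) - fgrad n gf (Yp pre)) \<bullet> (u pre - pbar t pre))"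
        unfolding G_def Dl_def gb_def using lp by (simp add: nth_append)
      also have "\<dots> = 0" unfolding P_def
        by (rule batch_mean[OF n_pos b_pos Lnn La Lz]) auto
      finally show "pre \<in> {}" using nz by simp
    qed auto
    finally show ?thesis .
  qed
  define M where "M = replicate_pmf (Suc k) P"
  have bound: "measure_pmf.expectation M F
      \<le> 3 * eta / (2 * (1 - t)) * measure_pmf.expectation M W + eps k + 3 * t"
    if t: "0 < t" "t < 1" for t
  proof -
    have finM: "finite (set_pmf M)" unfolding M_def by (rule finR)
    have EGM: "measure_pmf.expectation M (G t) = 0" unfolding M_def by (rule EG)
    have "measure_pmf.expectation M F
        \<le> measure_pmf.expectation M (\<lambda>Bs. G t Bs + (3 * eta / (2 * (1 - t)) * W Bs + eps k + 3 * t))"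
      apply (rule integral_mono_AE)
        apply (rule integrable_measure_pmf_finite[OF finM])
       apply (rule integrable_measure_pmf_finite[OF finM])
      apply (rule AE_pmfI)
      apply (rule pw[OF supp[folded M_def] t])
      apply assumption
      done
    also have "\<dots> = measure_pmf.expectation M (G t)
        + measure_pmf.expectation M (\<lambda>Bs. 3 * eta / (2 * (1 - t)) * W Bs + eps k + 3 * t)"
      by (rule Bochner_Integration.integral_add) (auto simp: integrable_measure_pmf_finite[OF finM])
    also have "measure_pmf.expectation M (\<lambda>Bs. 3 * eta / (2 * (1 - t)) * W Bs + eps k + 3 * t)
        = measure_pmf.expectation M (\<lambda>Bs. 3 * eta / (2 * (1 - t)) * W Bs) + (eps k + 3 * t)"
      unfolding add.assoc
      by (subst Bochner_Integration.integral_add) (auto simp: integrable_measure_pmf_finite[OF finM])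
    finally show ?thesis using EGM by simp
  qed
  define A where "A = measure_pmf.expectation M F"
  define EW where "EW = measure_pmf.expectation M W"
  have EW0: "EW \<ge> 0" unfolding EW_def W_def by (rule integral_nonneg_AE) (simp add: Let_def)
  have fin: "A \<le> 3 * eta / 2 * EW + eps k"
  proof (rule ccontr)
    assume nt: "\<not> A \<le> 3 * eta / 2 * EW + eps k"
    define B where "B = 3 * eta / 2 * EW"
    define d where "d = A - B - eps k"
    have d: "d > 0" using nt unfolding d_def B_def by simp
    have B0: "B \<ge> 0" unfolding B_def using EW0 eta by simp
    define K where "K = 2 * B + 3"
    have K: "K > 0" using B0 unfolding K_def by simp
    define t where "t = min (1/2) (d / (2 * K))"
    have t0: "t > 0" using d K unfolding t_def by simp
    have t1: "t \<le> 1/2" unfolding t_def by simp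
    have tK: "t * K \<le> d / 2"
    proof -
      have "t \<le> d / (2 * K)" unfolding t_def by simp
      then have "t * K \<le> d / (2 * K) * K" by (rule mult_right_mono) (use K in simp)
      also have "d / (2 * K) * K = d / 2" using K by simp
      finally show ?thesis .
    qed
    have bt: "A \<le> B / (1 - t) + eps k + 3 * t" using bound[of t] t0 t1 unfolding A_def EW_def B_def
      by (simp add: field_simps)
    have "B / (1 - t) \<le> B * (1 + 2 * t)"
    proof -
      have "0 \<le> t * (1 - 2 * t)" using t0 t1 by simp
      then have "1 \<le> (1 + 2 * t) * (1 - t)" by (simp add: algebra_simps)
      then have "1 / (1 - t) \<le> 1 + 2 * t" using t1 by (simp add: field_simps)
      then show ?thesis using B0 by (metis divide_inverse inverse_eq_divide mult_left_mono)
    qed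
    then have "d \<le> t * K" using bt unfolding d_def K_def by (simp add: algebra_simps)
    then show False using tK d by simp
  qed
  show ?thesis using fin unfolding A_def EW_def F_def W_def M_def P_def .
qed

end
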